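(* Let $\phi$ be the standard normal density, $\gamma(x)=\frac{1}{\pi(1+x^2)}$ the standard Cauchy density, $g=\phi*\gamma$, and for $\alpha\in(0,1)$ let $t(\alpha)>0$ be the posterior median threshold defined in the context. For $A\ge0$ and $n\ge 2$ let $t_A=\sqrt{2(1+A)\log n}$ and $\alpha_A=t^{-1}(t_A)$. Then there exist $N_0>0$ and $C>0$, both independent of $A$, such that for all $n\ge N_0$, \[ \alpha_A\le C(1+A)(\log n)\,n^{-1-A}. \]
   Context: For $\alpha\in[0,1]$, consider the single-coordinate posterior $(1-a(x))\delta_0+a(x)\gamma_x(u)\,du$ of $\theta$ given $x\sim\mathcal{N}(\theta,1)$ under the prior $(1-\alpha)\delta_0+\alpha\gamma(u)\,du$, where $a(x)=\frac{\alpha g(x)}{(1-\alpha)\phi(x)+\alpha g(x)}$ and $\gamma_x(u)=\phi(x-u)\gamma(u)/g(x)$. Its median is $0$ if and only if $|x|\le t(\alpha)$, which defines $t(\alpha)$; the map $\alpha\mapsto t(\alpha)$ is continuous and strictly decreasing, so $t^{-1}$ exists. *)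

theory Defs
  imports "HOL-Analysis.Analysis"
begin

definition std_normal :: "real \<Rightarrow> real" where
  "std_normal x = exp (- (x\<^sup>2) / 2) / sqrt (2 * pi)"

definition cauchy :: "real \<Rightarrow> real" where
  "cauchy u = 1 / (pi * (1 + u\<^sup>2))"

definition gconv :: "real \<Rightarrow> real" where
  "gconv x = (LINT u|lborel. std_normal (x - u) * cauchy u)"

definition post_a :: "real \<Rightarrow> real \<Rightarrow> real" where
  "post_a \<alpha> x = \<alpha> * gconv x / ((1 - \<alpha>) * std_normal x + \<alpha> * gconv x)"

definition post_dens :: "real \<Rightarrow> real \<Rightarrow> real" where
  "post_dens x u = std_normal (x - u) * cauchy u / gconv x"

definition post_neg :: "real \<Rightarrow> real \<Rightarrow> real" where
  "post_neg \<alpha> x = post_a \<alpha> x * (LINT u:{..<0}|lborel. post_dens x u)"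

definition post_pos :: "real \<Rightarrow> real \<Rightarrow> real" where
  "post_pos \<alpha> x = post_a \<alpha> x * (LINT u:{0<..}|lborel. post_dens x u)"

definition median_zero :: "real \<Rightarrow> real \<Rightarrow> bool" where
  "median_zero \<alpha> x \<longleftrightarrow> post_neg \<alpha> x \<le> 1/2 \<and> post_pos \<alpha> x \<le> 1/2"

text \<open>Threshold t(alpha): median is 0 iff |x| <= t(alpha).\<close>
definition thr :: "real \<Rightarrow> real" where
  "thr \<alpha> = Sup {\<bar>x\<bar> | x. median_zero \<alpha> x}"

end

theory Submission imports Defs "HOL-Probability.Probability" begin

definition ff :: "real \<Rightarrow> real \<Rightarrow> real" where
  "ff x u = std_normal (x - u) * cauchy u"

lemma std_normal_nd: "std_normal (x - u) = normal_density x 1 u"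
  unfolding std_normal_def normal_density_def by (simp add: power2_commute)

lemma std_normal_pos: "std_normal x > 0" unfolding std_normal_def by simp
lemma cauchy_pos: "cauchy x > 0" unfolding cauchy_def by (simp add: add_pos_nonneg)
lemma cauchy_le: "cauchy x \<le> 1/pi" unfolding cauchy_def
  by (simp add: divide_simps add_pos_nonneg)

lemma ff_nonneg: "ff x u \<ge> 0" unfolding ff_def using std_normal_pos cauchy_pos
  by (simp add: less_imp_le)

lemma ff_meas[measurable]: "ff x \<in> borel_measurable borel"
  unfolding ff_def std_normal_def cauchy_def by measurable

lemma ff_int: "integrable lborel (ff x)"
proof (rule Bochner_Integration.integrable_bound[of _ "\<lambda>u. normal_density x 1 u / pi"])
  show "integrable lborel (\<lambda>u. normal_density x 1 u / pi)" by simp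
  show "ff x \<in> borel_measurable lborel" by simp
  show "AE u in lborel. norm (ff x u) \<le> norm (normal_density x 1 u / pi)"
  proof (rule AE_I2)
    fix u
    have "ff x u \<le> normal_density x 1 u * (1/pi)"
      unfolding ff_def std_normal_nd[symmetric]
      using cauchy_le std_normal_pos by (intro mult_left_mono) (auto simp: less_imp_le)
    then show "norm (ff x u) \<le> norm (normal_density x 1 u / pi)"
      using ff_nonneg[of x u] by simp
  qed
qed

lemma ff_sint: "S \<in> sets borel \<Longrightarrow> set_integrable lborel S (ff x)"
  unfolding set_integrable_def by (rule integrable_mult_indicator) (auto simp: ff_int)

lemma gconv_ff: "gconv x = integral\<^sup>L lborel (ff x)"
  unfolding gconv_def ff_def ..

lemma sint_nonneg: "0 \<le> (LINT u:S|lborel. ff x u)"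
  unfolding set_lebesgue_integral_def
  by (rule Bochner_Integration.integral_nonneg) (auto simp: ff_nonneg)

lemma sint_mono_set: assumes "A \<subseteq> B" "A \<in> sets borel" "B \<in> sets borel"
  shows "(LINT u:A|lborel. ff x u) \<le> (LINT u:B|lborel. ff x u)"
  unfolding set_lebesgue_integral_def
proof (rule integral_mono)
  show "integrable lborel (\<lambda>u. indicator A u *\<^sub>R ff x u)"
    using ff_sint[OF assms(2)] unfolding set_integrable_def .
  show "integrable lborel (\<lambda>u. indicator B u *\<^sub>R ff x u)"
    using ff_sint[OF assms(3)] unfolding set_integrable_def .
  fix u show "indicator A u *\<^sub>R ff x u \<le> indicator B u *\<^sub>R ff x u"
    using assms(1) ff_nonneg[of x u] by (auto split: split_indicator)
qed

lemma gconv_split: assumes "A \<in> sets borel" "B \<in> sets borel" "A \<inter> B = {}" "A \<union> B = UNIV"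
  shows "gconv x = (LINT u:A|lborel. ff x u) + (LINT u:B|lborel. ff x u)"
proof -
  have "gconv x = (LINT u:A \<union> B|lborel. ff x u)"
    unfolding gconv_ff set_lebesgue_integral_def using assms(4) by simp
  also have "\<dots> = (LINT u:A|lborel. ff x u) + (LINT u:B|lborel. ff x u)"
    by (rule set_integral_Un) (use assms ff_sint in auto)
  finally show ?thesis .
qed

lemma low: assumes S: "S \<in> sets borel" "{a..a+1} \<subseteq> S"
  and b: "\<And>u. u \<in> {a..a+1} \<Longrightarrow> \<bar>x - u\<bar> \<le> 1 \<and> \<bar>u\<bar> \<le> \<bar>x\<bar> + 1"
  shows "std_normal 1 * cauchy (\<bar>x\<bar> + 1) \<le> (LINT u:S|lborel. ff x u)"
proof -
  have "std_normal 1 * cauchy (\<bar>x\<bar> + 1) = (LINT u:{a..a+1}|lborel. std_normal 1 * cauchy (\<bar>x\<bar> + 1))"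
    by (subst set_integral_const) auto
  also have "\<dots> \<le> (LINT u:{a..a+1}|lborel. ff x u)"
  proof (rule set_integral_mono)
    show "set_integrable lborel {a..a + 1} (\<lambda>u. std_normal 1 * cauchy (\<bar>x\<bar> + 1))"
      by (simp add: set_integrable_def)
    show "set_integrable lborel {a..a + 1} (ff x)" by (rule ff_sint) simp
    fix u assume u: "u \<in> {a..a+1}"
    from b[OF u] have "\<bar>x-u\<bar> \<le> \<bar>1\<bar>" and "\<bar>u\<bar> \<le> \<bar>\<bar>x\<bar>+1\<bar>" by auto
    then have h1: "(x-u)^2 \<le> 1^2" and h2: "u^2 \<le> (\<bar>x\<bar>+1)^2"
      by (simp_all only: abs_le_square_iff)
    have "std_normal 1 \<le> std_normal (x - u)" unfolding std_normal_def
      using h1 by (simp add: divide_right_mono)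
    moreover have "cauchy (\<bar>x\<bar> + 1) \<le> cauchy u" unfolding cauchy_def
      using h2 by (auto intro!: divide_left_mono mult_pos_pos add_pos_nonneg)
    ultimately show "std_normal 1 * cauchy (\<bar>x\<bar> + 1) \<le> ff x u" unfolding ff_def
      using std_normal_pos cauchy_pos by (intro mult_mono) (auto simp: less_imp_le)
  qed
  also have "\<dots> \<le> (LINT u:S|lborel. ff x u)" by (rule sint_mono_set) (use S in auto)
  finally show ?thesis .
qed

lemma up: assumes S: "S \<in> sets borel" and b: "\<And>u. u \<in> S \<Longrightarrow> x * u \<le> 0"
  shows "(LINT u:S|lborel. ff x u) \<le> exp (- x\<^sup>2 / 2) / pi"
proof -
  have "(LINT u:S|lborel. ff x u) \<le> (\<integral>u. exp (- x\<^sup>2 / 2) / pi * normal_density 0 1 u \<partial>lborel)"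
    unfolding set_lebesgue_integral_def
  proof (rule integral_mono)
    show "integrable lborel (\<lambda>u. indicator S u *\<^sub>R ff x u)"
      using ff_sint[OF S] unfolding set_integrable_def .
    show "integrable lborel (\<lambda>u. exp (- x\<^sup>2 / 2) / pi * normal_density 0 1 u)" by simp
    fix u
    show "indicator S u *\<^sub>R ff x u \<le> exp (- x\<^sup>2 / 2) / pi * normal_density 0 1 u"
    proof (cases "u \<in> S")
      case True
      have "x\<^sup>2 + u\<^sup>2 \<le> (x - u)\<^sup>2" using b[OF True] by (simp add: power2_diff mult.commute)
      then have "exp (- (x - u)\<^sup>2 / 2) \<le> exp (- x\<^sup>2 / 2) * exp (- u\<^sup>2 / 2)"
        by (simp add: exp_add[symmetric])
      then have e: "std_normal (x - u) \<le> exp (- x\<^sup>2 / 2) * normal_density 0 1 u"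
        unfolding std_normal_def std_normal_density_def by (simp add: divide_right_mono)
      have "ff x u \<le> (exp (- x\<^sup>2 / 2) * normal_density 0 1 u) * (1/pi)"
        unfolding ff_def using e cauchy_le[of u] cauchy_pos[of u]
        by (intro mult_mono) (auto simp: less_imp_le)
      then show ?thesis using True by simp
    next
      case False then show ?thesis by simp
    qed
  qed
  also have "\<dots> = exp (- x\<^sup>2 / 2) / pi" by simp
  finally show ?thesis .
qed

lemma reflect0: "(LINT u:{0<..}|lborel. ff 0 u) = (LINT u:{..<0}|lborel. ff 0 u)"
proof -
  have "(LINT u:{..<0}|lborel. ff 0 u) = \<bar>-1\<bar> *\<^sub>R (\<integral>u. indicator {..<0} (0 + (-1) * u) *\<^sub>R ff 0 (0 + (-1) * u) \<partial>lborel)"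
    unfolding set_lebesgue_integral_def by (rule lborel_integral_real_affine) simp
  also have "\<dots> = (LINT u:{0<..}|lborel. ff 0 u)"
    unfolding set_lebesgue_integral_def ff_def std_normal_def cauchy_def
    apply simp
    by (intro Bochner_Integration.integral_cong) (auto split: split_indicator)
  finally show ?thesis by simp
qed

lemma gconv_pos: "gconv x > 0"
proof -
  have "std_normal 1 * cauchy (\<bar>x\<bar> + 1) \<le> (LINT u:UNIV|lborel. ff x u)"
    by (rule low[of _ x]) auto
  moreover have "std_normal 1 * cauchy (\<bar>x\<bar> + 1) > 0" using std_normal_pos cauchy_pos by simp
  ultimately show ?thesis unfolding gconv_ff set_lebesgue_integral_def by simp
qed

lemma post_pos_eq: "post_pos \<alpha> x = \<alpha> * (LINT u:{0<..}|lborel. ff x u) / ((1-\<alpha>) * std_normal x + \<alpha> * gconv x)"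
proof -
  have "(LINT u:{0<..}|lborel. post_dens x u) = (LINT u:{0<..}|lborel. ff x u) / gconv x"
    unfolding post_dens_def ff_def by simp
  then show ?thesis unfolding post_pos_def post_a_def using gconv_pos[of x] by simp
qed

lemma post_neg_eq: "post_neg \<alpha> x = \<alpha> * (LINT u:{..<0}|lborel. ff x u) / ((1-\<alpha>) * std_normal x + \<alpha> * gconv x)"
proof -
  have "(LINT u:{..<0}|lborel. post_dens x u) = (LINT u:{..<0}|lborel. ff x u) / gconv x"
    unfolding post_dens_def ff_def by simp
  then show ?thesis unfolding post_neg_def post_a_def using gconv_pos[of x] by simp
qed

lemma keyalg:
  fixes \<alpha> \<phi> g P Q L E :: real
  assumes "0 < \<alpha>" "\<alpha> < 1" "\<phi> > 0" "g > 0" "g = P + Q" "\<alpha> * P / ((1-\<alpha>) * \<phi> + \<alpha> * g) \<le> 1/2"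
    "L \<le> P" "0 \<le> Q" "Q \<le> E"
  shows "\<alpha> * L \<le> \<phi> + E"
proof -
  have D: "(1-\<alpha>) * \<phi> + \<alpha> * g > 0" using assms by (simp add: add_pos_pos)
  then have "2 * (\<alpha> * P) \<le> (1-\<alpha>) * \<phi> + \<alpha> * g" using assms(6) by (simp add: divide_simps)
  then have "\<alpha> * P \<le> (1-\<alpha>) * \<phi> + \<alpha> * Q" using assms(5) by (simp add: algebra_simps)
  moreover have "\<alpha> * L \<le> \<alpha> * P" using assms by simp
  moreover have "\<alpha> * Q \<le> E" using assms mult_left_le_one_le[of Q \<alpha>] by linarith
  moreover have "(1-\<alpha>) * \<phi> \<le> \<phi>" using assms by (simp add: algebra_simps)
  ultimately show ?thesis by linarith
qed

lemma point:
  assumes "median_zero \<alpha> x" "x \<noteq> 0" "0 < \<alpha>" "\<alpha> < 1"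
  shows "\<alpha> * (std_normal 1 * cauchy (\<bar>x\<bar> + 1)) \<le> std_normal x + exp (- x\<^sup>2 / 2) / pi"
proof (cases "x > 0")
  case True
  show ?thesis
  proof (rule keyalg[OF assms(3,4) std_normal_pos gconv_pos])
    show "gconv x = (LINT u:{0<..}|lborel. ff x u) + (LINT u:{..0}|lborel. ff x u)"
      by (rule gconv_split) auto
    show "\<alpha> * (LINT u:{0<..}|lborel. ff x u) / ((1 - \<alpha>) * std_normal x + \<alpha> * gconv x) \<le> 1 / 2"
      using assms(1) unfolding median_zero_def post_pos_eq by simp
    show "std_normal 1 * cauchy (\<bar>x\<bar> + 1) \<le> (LINT u:{0<..}|lborel. ff x u)"
      by (rule low[of _ x]) (use True in auto)
    show "0 \<le> (LINT u:{..0}|lborel. ff x u)" by (rule sint_nonneg)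
    show "(LINT u:{..0}|lborel. ff x u) \<le> exp (- x\<^sup>2 / 2) / pi"
      by (rule up) (use True in \<open>auto simp: mult_nonneg_nonpos\<close>)
  qed
next
  case False
  then have xn: "x < 0" using assms(2) by simp
  show ?thesis
  proof (rule keyalg[OF assms(3,4) std_normal_pos gconv_pos])
    show "gconv x = (LINT u:{..<0}|lborel. ff x u) + (LINT u:{0..}|lborel. ff x u)"
      by (rule gconv_split) auto
    show "\<alpha> * (LINT u:{..<0}|lborel. ff x u) / ((1 - \<alpha>) * std_normal x + \<alpha> * gconv x) \<le> 1 / 2"
      using assms(1) unfolding median_zero_def post_neg_eq by simp
    show "std_normal 1 * cauchy (\<bar>x\<bar> + 1) \<le> (LINT u:{..<0}|lborel. ff x u)"
      by (rule low[of _ "x - 1"]) (use xn in auto)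
    show "0 \<le> (LINT u:{0..}|lborel. ff x u)" by (rule sint_nonneg)
    show "(LINT u:{0..}|lborel. ff x u) \<le> exp (- x\<^sup>2 / 2) / pi"
      by (rule up) (use xn in \<open>auto simp: mult_nonpos_nonneg\<close>)
  qed
qed

lemma median0: assumes "0 < \<alpha>" "\<alpha> < 1" shows "median_zero \<alpha> 0"
proof -
  have D: "(1-\<alpha>) * std_normal 0 + \<alpha> * gconv 0 > 0"
    using assms std_normal_pos[of 0] gconv_pos[of 0] by (simp add: add_pos_pos)
  have g1: "gconv 0 = (LINT u:{0<..}|lborel. ff 0 u) + (LINT u:{..0}|lborel. ff 0 u)"
    by (rule gconv_split) auto
  have g2: "gconv 0 = (LINT u:{..<0}|lborel. ff 0 u) + (LINT u:{0..}|lborel. ff 0 u)"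
    by (rule gconv_split) auto
  have m1: "(LINT u:{..<0}|lborel. ff 0 u) \<le> (LINT u:{..0}|lborel. ff 0 u)"
    by (rule sint_mono_set) auto
  have m2: "(LINT u:{0<..}|lborel. ff 0 u) \<le> (LINT u:{0..}|lborel. ff 0 u)"
    by (rule sint_mono_set) auto
  have p: "2 * (\<alpha> * (LINT u:{0<..}|lborel. ff 0 u)) \<le> (1-\<alpha>) * std_normal 0 + \<alpha> * gconv 0"
  proof -
    have "2 * (LINT u:{0<..}|lborel. ff 0 u) \<le> gconv 0"
      using g1 m1 reflect0 by simp
    then have "\<alpha> * (2 * (LINT u:{0<..}|lborel. ff 0 u)) \<le> \<alpha> * gconv 0"
      using assms by (intro mult_left_mono) auto
    moreover have "0 \<le> (1-\<alpha>) * std_normal 0" using assms std_normal_pos[of 0] by simp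
    ultimately show ?thesis by (simp add: algebra_simps)
  qed
  have n: "2 * (\<alpha> * (LINT u:{..<0}|lborel. ff 0 u)) \<le> (1-\<alpha>) * std_normal 0 + \<alpha> * gconv 0"
  proof -
    have "2 * (LINT u:{..<0}|lborel. ff 0 u) \<le> gconv 0"
      using g2 m2 reflect0 by simp
    then have "\<alpha> * (2 * (LINT u:{..<0}|lborel. ff 0 u)) \<le> \<alpha> * gconv 0"
      using assms by (intro mult_left_mono) auto
    moreover have "0 \<le> (1-\<alpha>) * std_normal 0" using assms std_normal_pos[of 0] by simp
    ultimately show ?thesis by (simp add: algebra_simps)
  qed
  show ?thesis unfolding median_zero_def post_pos_eq post_neg_eq
    using p n D by (simp add: divide_simps)
qed

definition KK :: real where "KK = (pi + sqrt (2 * pi)) * exp (1/2)"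

lemma KK_pos: "KK > 0" unfolding KK_def by (simp add: add_pos_nonneg)

lemma point2:
  assumes "median_zero \<alpha> x" "x \<noteq> 0" "0 < \<alpha>" "\<alpha> < 1"
  shows "\<alpha> \<le> KK * (exp (- \<bar>x\<bar>\<^sup>2 / 2) * (1 + (\<bar>x\<bar> + 1)\<^sup>2))"
proof -
  have L: "std_normal 1 * cauchy (\<bar>x\<bar> + 1) > 0" using std_normal_pos cauchy_pos by simp
  have "\<alpha> \<le> (std_normal x + exp (- x\<^sup>2 / 2) / pi) / (std_normal 1 * cauchy (\<bar>x\<bar> + 1))"
    using point[OF assms] L by (simp add: pos_le_divide_eq)
  also have "\<dots> = KK * (exp (- \<bar>x\<bar>\<^sup>2 / 2) * (1 + (\<bar>x\<bar> + 1)\<^sup>2))"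
  proof -
    have alg: "(a/q + a/p) / ((1/c)/q * (1/(p*r))) = (p+q)*c*(a*r)"
      if "q > 0" "p > 0" "c > 0" "r > 0" for a q p c r :: real
      using that by (simp add: field_simps)
    have e: "exp (- (1\<^sup>2) / 2) = 1 / exp (1/2::real)" by (simp add: exp_minus inverse_eq_divide)
    have "(std_normal x + exp (- x\<^sup>2 / 2) / pi) / (std_normal 1 * cauchy (\<bar>x\<bar> + 1))
        = (exp (- x\<^sup>2 / 2) / sqrt (2*pi) + exp (- x\<^sup>2 / 2) / pi) /
          ((1/exp (1/2)) / sqrt (2*pi) * (1 / (pi * (1 + (\<bar>x\<bar> + 1)\<^sup>2))))"
      unfolding std_normal_def cauchy_def e ..
    also have "\<dots> = (pi + sqrt (2*pi)) * exp (1/2) * (exp (- x\<^sup>2 / 2) * (1 + (\<bar>x\<bar> + 1)\<^sup>2))"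
      by (rule alg) (auto simp: add_pos_nonneg)
    finally show ?thesis unfolding KK_def power2_abs by simp
  qed
  finally show ?thesis .
qed

lemma hmono: fixes s y :: real assumes "2 \<le> s" "s \<le> y"
  shows "exp (- y\<^sup>2 / 2) * (1 + (y + 1)\<^sup>2) \<le> exp (- s\<^sup>2 / 2) * (1 + (s + 1)\<^sup>2)"
proof -
  define d where "d = y - s"
  have d: "d \<ge> 0" "y = s + d" using assms by (auto simp: d_def)
  have "2 * 2 * d \<le> 2 * s * d" using d assms by (intro mult_right_mono) auto
  moreover have "y\<^sup>2 = s\<^sup>2 + 2 * s * d + d\<^sup>2" using d by (simp add: power2_sum)
  moreover have "0 \<le> d\<^sup>2" by simp
  ultimately have "s\<^sup>2 + 4 * d \<le> y\<^sup>2" by linarith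
  then have e1: "exp (- y\<^sup>2 / 2) \<le> exp (- s\<^sup>2 / 2) * exp (- 2 * d)"
    by (simp add: exp_add[symmetric])
  have "(y+1)\<^sup>2 \<le> (s+1)\<^sup>2 * (1+d)\<^sup>2"
  proof -
    have "y + 1 \<le> (s+1)*(1+d)" using d assms by (simp add: algebra_simps)
    then have "(y+1)\<^sup>2 \<le> ((s+1)*(1+d))\<^sup>2" using d assms by (intro power_mono) auto
    then show ?thesis by (simp add: power_mult_distrib)
  qed
  moreover have "1 \<le> (1+d)\<^sup>2" using d by simp
  ultimately have e2: "1 + (y+1)\<^sup>2 \<le> (1 + (s+1)\<^sup>2) * (1+d)\<^sup>2" by (simp add: algebra_simps)
  have e3: "(1+d)\<^sup>2 * exp (- 2 * d) \<le> 1"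
  proof -
    have "1 + d \<le> exp d" by (rule exp_ge_add_one_self)
    then have "(1+d)\<^sup>2 \<le> (exp d)\<^sup>2" using d by (intro power_mono) auto
    also have "\<dots> = exp (2 * d)" by (simp add: power2_eq_square exp_add[symmetric])
    finally show ?thesis by (simp add: exp_minus field_simps)
  qed
  have "exp (- y\<^sup>2 / 2) * (1 + (y + 1)\<^sup>2) \<le> (exp (- s\<^sup>2 / 2) * exp (- 2 * d)) * ((1 + (s+1)\<^sup>2) * (1+d)\<^sup>2)"
    using e1 e2 by (intro mult_mono) (auto simp: add_pos_nonneg)
  also have "\<dots> = exp (- s\<^sup>2 / 2) * (1 + (s+1)\<^sup>2) * ((1+d)\<^sup>2 * exp (- 2 * d))" by simp
  also have "\<dots> \<le> exp (- s\<^sup>2 / 2) * (1 + (s+1)\<^sup>2) * 1"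
    using e3 by (intro mult_left_mono) (auto simp: add_pos_nonneg)
  finally show ?thesis by simp
qed

theorem lemma12:
  shows "\<exists>N0 > 0. \<exists>C > 0. \<forall>A \<ge> (0::real). \<forall>n::nat. n \<ge> 2 \<longrightarrow> real n \<ge> N0 \<longrightarrow>
           (\<forall>\<alpha>. 0 < \<alpha> \<and> \<alpha> < 1 \<and> thr \<alpha> = sqrt (2 * (1 + A) * ln (real n)) \<longrightarrow>
              \<alpha> \<le> C * (1 + A) * ln (real n) * real n powr (- 1 - A))"
proof -
  have main: "\<alpha> \<le> 6 * KK * exp 1 * (1 + A) * ln (real n) * real n powr (- 1 - A)"
    if A: "A \<ge> 0" and n2: "n \<ge> 2" and n27: "real n \<ge> 27"
    and H: "0 < \<alpha> \<and> \<alpha> < 1 \<and> thr \<alpha> = sqrt (2 * (1 + A) * ln (real n))"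
    for A :: real and n :: nat and \<alpha> :: real
  proof -
  from H have a0: "0 < \<alpha>" and a1: "\<alpha> < 1" and th: "thr \<alpha> = sqrt (2 * (1 + A) * ln (real n))" by auto
  define t where "t = sqrt (2 * (1 + A) * ln (real n))"
  have npos: "real n > 0" using n27 by simp
  have ln3: "ln (real n) \<ge> 3"
  proof -
    have "exp (3::real) = exp 1 ^ 3" using exp_of_nat_mult[of 3 1] by simp
    also have "\<dots> \<le> 3 ^ 3" by (intro power_mono exp_le) auto
    finally have "exp 3 \<le> real n" using n27 by simp
    then show ?thesis using npos by (simp add: ln_ge_iff)
  qed
  have t2: "t\<^sup>2 = 2 * (1 + A) * ln (real n)" unfolding t_def using A ln3 by simp
  have t6: "t\<^sup>2 \<ge> 6"
  proof -
    have "2 * 1 * 3 \<le> 2 * (1 + A) * ln (real n)" using A ln3 by (intro mult_mono) auto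
    then show ?thesis using t2 by simp
  qed
  have tpos: "t \<ge> 0" unfolding t_def using A ln3 by simp
  define s where "s = sqrt (t\<^sup>2 - 2)"
  have s2: "s\<^sup>2 = t\<^sup>2 - 2" unfolding s_def using t6 by simp
  have sge: "s \<ge> 2" unfolding s_def using t6 by (simp add: real_le_rsqrt)
  have slt: "s < t"
  proof (rule power_less_imp_less_base[of _ 2])
    show "s ^ 2 < t ^ 2" using s2 by simp
  qed (use tpos in auto)
  obtain x where mx: "median_zero \<alpha> x" and xs: "\<bar>x\<bar> > s"
  proof (rule ccontr)
    assume "\<not> thesis"
    with that have all: "\<And>x. median_zero \<alpha> x \<Longrightarrow> \<bar>x\<bar> \<le> s" by force
    have "thr \<alpha> \<le> s" unfolding thr_def
      by (rule cSup_least) (use median0[OF a0 a1] all in auto)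
    then show False using th slt unfolding t_def by simp
  qed
  have x0: "x \<noteq> 0" using xs sge by auto
  have "\<alpha> \<le> KK * (exp (- \<bar>x\<bar>\<^sup>2 / 2) * (1 + (\<bar>x\<bar> + 1)\<^sup>2))" by (rule point2[OF mx x0 a0 a1])
  also have "\<dots> \<le> KK * (exp (- s\<^sup>2 / 2) * (1 + (s + 1)\<^sup>2))"
    using hmono[OF sge, of "\<bar>x\<bar>"] xs KK_pos by (intro mult_left_mono) auto
  also have "\<dots> \<le> KK * (exp 1 * real n powr (- 1 - A) * (6 * (1 + A) * ln (real n)))"
  proof (intro mult_left_mono mult_mono)
    have "exp (- s\<^sup>2 / 2) = exp 1 * exp (- t\<^sup>2 / 2)" using s2 by (simp add: exp_add[symmetric] field_simps)
    also have "exp (- t\<^sup>2 / 2) = real n powr (- 1 - A)"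
    proof -
      have "- t\<^sup>2 / 2 = (- 1 - A) * ln (real n)" using t2 by (simp add: divide_simps, simp add: algebra_simps)
      then show ?thesis using npos by (simp add: powr_def)
    qed
    finally show "exp (- s\<^sup>2 / 2) \<le> exp 1 * real n powr (- 1 - A)" by simp
    have "(s+1)\<^sup>2 \<le> (t+1)\<^sup>2" using slt sge by (intro power_mono) auto
    moreover have "t + 1 \<le> t\<^sup>2"
    proof -
      have "t \<ge> 2" by (rule power2_le_imp_le) (use t6 tpos in auto)
      then have "2 * t \<le> t * t" by (intro mult_right_mono) auto
      with \<open>t \<ge> 2\<close> have "t + 1 \<le> t * t" by linarith
      then show ?thesis by (simp add: power2_eq_square)
    qed
    ultimately have "1 + (s + 1)\<^sup>2 \<le> 3 * t\<^sup>2"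
      by (simp add: power2_sum)
    also have "3 * t\<^sup>2 = 6 * (1 + A) * ln (real n)" using t2 by simp
    finally show "1 + (s + 1)\<^sup>2 \<le> 6 * (1 + A) * ln (real n)" .
  qed (use KK_pos ln3 A in auto)
  also have "\<dots> = 6 * KK * exp 1 * (1 + A) * ln (real n) * real n powr (- 1 - A)" by simp
  finally show "\<alpha> \<le> 6 * KK * exp 1 * (1 + A) * ln (real n) * real n powr (- 1 - A)" .
  qed
  show ?thesis
    apply (rule exI[of _ 27])
    apply (intro conjI)
     apply simp
    apply (rule exI[of _ "6 * KK * exp 1"])
    using main KK_pos by auto
qed

end
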